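(* For all integers $t\ge0$ and $k\ge1$, \[D(2^{k+1}t+2^k-1)\ge\min\bigl(D(t),D(t+1)\bigr)+\frac{k}{2^{k-1}}.\]
   Context: $s(n)$ is the number of $1$s in the binary expansion of $n\ge0$; $\delta(j,t)=\lim_{N\to\infty}\frac1N|\{0\le n<N: s(n+t)-s(n)=j\}|$ for $j\in\mathbb Z$, a probability distribution on $\mathbb Z$, and $\kappa_j(t)$ denotes its $j$-th cumulant ($\log\sum_k\delta(k,t)e^{2\pi ik\vartheta}=\sum_{j\ge0}\frac{\kappa_j(t)}{j!}(2\pi i\vartheta)^j$ near $\vartheta=0$). Set $D(t)=\kappa_2(t)-\kappa_3(t)/3$. *)

theory Defs
  imports "HOL-Analysis.Analysis"
begin

fun bsum :: "nat \<Rightarrow> nat" where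
  "bsum n = (if n = 0 then 0 else n mod 2 + bsum (n div 2))"

declare bsum.simps[simp del]

definition delta :: "int \<Rightarrow> nat \<Rightarrow> real" where
  "delta j t = lim (\<lambda>N::nat. real (card {n. n < N \<and> int (bsum (n + t)) - int (bsum n) = j}) / real N)"

text \<open>Cumulant generating function K_t(u) = log (sum_k delta(k,t) e^(k u)); with u = 2 pi i theta
  this is the logarithm of the characteristic function from the paper.\<close>
definition cgf :: "nat \<Rightarrow> complex \<Rightarrow> complex" where
  "cgf t u = Ln (\<Sum>\<^sub>\<infinity>k\<in>(UNIV::int set). complex_of_real (delta k t) * exp (of_int k * u))"

definition kappa :: "nat \<Rightarrow> nat \<Rightarrow> complex" where
  "kappa j t = (deriv ^^ j) (cgf t) 0"

definition D :: "nat \<Rightarrow> real" where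
  "D t = Re (kappa 2 t - kappa 3 t / 3)"

end

theory Submission
  imports Defs "HOL-Real_Asymp.Real_Asymp" "HOL-Complex_Analysis.Complex_Analysis"
begin


lemma pow2_even_iter: assumes "\<And>t. f (2*t) = (f t :: real)" shows "f (2^j * (m::nat)) = f m"
proof (induction j)
  case (Suc j)
  have "2^Suc j * m = 2 * (2^j * m)" by simp
  then show ?case using assms Suc by metis
qed simp

lemma aux1: "(A::real) - B = -2 + R \<Longrightarrow> C = (B + A)/2 + 1 \<Longrightarrow> Q = R/2 \<Longrightarrow> A - C = -2 + Q"
  by (simp add: field_simps)
lemma aux2: "(A::real) - B = -2 + R \<Longrightarrow> Dn - DP = S + T \<Longrightarrow> E = 1 + (Dn + DP)/2 + (A - B)/2 \<Longrightarrow>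
   Q = R/2 \<Longrightarrow> S' = S/2 \<Longrightarrow> T' = T/2 + R/2 \<Longrightarrow> E - DP = S' + T'"
  by (simp add: field_simps)

lemma final_comb:
  fixes a b :: "nat \<Rightarrow> real" and t k :: nat
  assumes ae: "\<And>t. a (2*t) = a t" and be: "\<And>t. b (2*t) = b t"
    and ao: "\<And>t. a (2*t+1) = (a t + a (t+1)) / 2 + 1"
    and bo: "\<And>t. b (2*t+1) = (b t + b (t+1)) / 2 + 3/2 * (a t - a (t+1))"
    and k: "k \<ge> 1"
  shows "a (2^(k+1)*t + 2^k - 1) - b (2^(k+1)*t + 2^k - 1) / 3 \<ge>
     min (a t - b t / 3) (a (t+1) - b (t+1) / 3) + real k / 2^(k-1)"
proof -
  define Dd where "Dd s = a s - b s / 3" for s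
  have Dodd: "Dd (2*m+1) = 1 + (Dd m + Dd (m+1)) / 2 + (a (m+1) - a m) / 2" for m
    unfolding Dd_def ao bo by (simp add: field_simps)
  have xb: "a (s+1) - a s \<ge> -2" for s
  proof (induction s rule: less_induct)
    case (less s)
    show ?case
    proof (cases "s = 0")
      case True
      have "a 1 = (a 0 + a 1) / 2 + 1" using ao[of 0] by simp
      then have "a 1 - a 0 = 2" by (simp add: field_simps)
      then show ?thesis using True by simp
    next
      case False
      show ?thesis
      proof (cases "even s")
        case True
        then obtain u where u: "s = 2*u" by blast
        with False have "u < s" by simp
        have "a (s+1) - a s = (a (u+1) - a u) / 2 + 1" unfolding u ao ae by simp
        moreover have "a (u+1) - a u \<ge> -2" using less \<open>u < s\<close> by blast
        ultimately show ?thesis by (simp add: field_simps)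
      next
        case odd: False
        then obtain u where u: "s = 2*u+1" by (metis oddE)
        then have "u < s" by simp
        have "s + 1 = 2*(u+1)" using u by simp
        then have h1: "a (s+1) = a (u+1)" using ae by metis
        have h2: "a s = (a u + a (u+1)) / 2 + 1" unfolding u ao ..
        have "a (s+1) - a s = (a (u+1) - a u) / 2 - 1" unfolding h1 h2 by (simp add: field_simps)
        moreover have "a (u+1) - a u \<ge> -2" using less \<open>u < s\<close> by blast
        ultimately show ?thesis by (simp add: field_simps)
      qed
    qed
  qed
  define x where "x = a (t+1) - a t"
  define P where "P = 2*t+1"
  define n where "n j = 2^(j+1)*t + 2^j - 1" for j :: nat
  have nS: "n (Suc j) = 2 * n j + 1" for j
  proof -
    obtain p where p: "(2::nat)^j = Suc p" using not0_implies_Suc[of "(2::nat)^j"] by auto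
    have "(2::nat)^(Suc j) = 2 * Suc p" using p by simp
    then show ?thesis unfolding n_def using p by (simp add: algebra_simps)
  qed
  have n1: "n j + 1 = 2^j * P" for j
  proof -
    obtain p where p: "(2::nat)^j = Suc p" using not0_implies_Suc[of "(2::nat)^j"] by auto
    then show ?thesis unfolding n_def P_def using p by (simp add: algebra_simps)
  qed
  have aP: "a (n j + 1) = a P" for j unfolding n1 using pow2_even_iter[of a] ae by blast
  have bP: "b (n j + 1) = b P" for j unfolding n1 using pow2_even_iter[of b] be by blast
  have DP: "Dd (n j + 1) = Dd P" for j unfolding Dd_def aP bP ..
  have main: "a P - a (n j) = -2 + (x/2+3)/2^j \<and> Dd (n j) - Dd P = (Dd t - Dd P)/2^j + j*(x/2+3)/2^j" for j
  proof (induction j)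
    case 0
    have n0: "n 0 = 2*t" unfolding n_def by simp
    show ?case unfolding n0 unfolding Dd_def P_def ae be ao x_def by simp
  next
    case (Suc j)
    have e1: "a (n (Suc j)) = (a (n j) + a P) / 2 + 1" unfolding nS ao using aP[of j] by simp
    have e2: "Dd (n (Suc j)) = 1 + (Dd (n j) + Dd P) / 2 + (a P - a (n j)) / 2"
      unfolding nS Dodd using aP[of j] DP[of j] by simp
    have w: "(2::real)^Suc j = 2 * 2^j" by simp
    have h1: "(x/2+3)/2^Suc j = ((x/2+3)/2^j)/2" unfolding w by simp
    have h2: "(Dd t - Dd P)/2^Suc j = ((Dd t - Dd P)/2^j)/2" unfolding w by simp
    have h3: "real (Suc j) * (x/2+3)/2^Suc j = (real j * (x/2+3)/2^j)/2 + ((x/2+3)/2^j)/2"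
      unfolding w by (simp add: field_simps)
    from Suc have I1: "a P - a (n j) = -2 + (x/2+3)/2^j"
      and I2: "Dd (n j) - Dd P = (Dd t - Dd P)/2^j + j*(x/2+3)/2^j" by auto
    show ?case
    proof
      show "a P - a (n (Suc j)) = -2 + (x/2+3)/2^Suc j" using aux1[OF I1 e1 h1] .
      show "Dd (n (Suc j)) - Dd P = (Dd t - Dd P)/2^Suc j + real (Suc j)*(x/2+3)/2^Suc j"
        using aux2[OF I1 I2 e2 h1 h2 h3] .
    qed
  qed
  define c :: real where "c = 1 / 2^k"
  have c0: "0 \<le> c" "c \<le> 1" unfolding c_def by simp_all
  define M where "M = min (Dd t) (Dd (t+1))"
  have DPv: "Dd P = 1 + (Dd t + Dd (t+1)) / 2 + x / 2" unfolding P_def Dodd x_def ..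
  have f1: "Dd P - M \<ge> 1 + x/2" unfolding DPv M_def min_def by (auto simp: field_simps)
  have x2: "x \<ge> -2" unfolding x_def using xb[of t] .
  have g1: "0 \<le> (1 - c) * (Dd P - M)" using c0 f1 x2 by (intro mult_nonneg_nonneg) auto
  have g2: "0 \<le> c * (Dd t - M)" using c0 unfolding M_def by (intro mult_nonneg_nonneg) auto
  have g3: "0 \<le> real k * c * (x/2 + 1)" using c0 x2 by (intro mult_nonneg_nonneg) auto
  have Dn: "Dd (n k) = Dd P + (Dd t - Dd P) * c + real k * (x/2+3) * c"
    using main[of k] unfolding c_def by (simp add: field_simps)
  have kk: "real k / 2^(k-1) = 2 * real k * c"
  proof -
    have "(2::real)^k = 2 * 2^(k-1)" using k by (metis Suc_diff_le diff_Suc_1 power_Suc)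
    then show ?thesis unfolding c_def by (simp add: field_simps)
  qed
  have "Dd (n k) - M - 2 * real k * c = (1 - c) * (Dd P - M) + c * (Dd t - M) + real k * c * (x/2 + 1)"
    unfolding Dn by (simp add: algebra_simps)
  then have "Dd (n k) \<ge> M + real k / 2^(k-1)" using g1 g2 g3 kk by linarith
  then show ?thesis unfolding Dd_def n_def M_def by simp
qed



lemma bsum_0[simp]: "bsum 0 = 0" by (simp add: bsum.simps)
lemma bsum_even[simp]: "bsum (2*n) = bsum n"
  by (cases "n=0") (simp_all add: bsum.simps[of "2*n"])
lemma bsum_odd: "bsum (2*n+1) = bsum n + 1"
  using bsum.simps[of "Suc (2*n)"] by simp
lemma bsum_odd'[simp]: "bsum (Suc (2*n)) = Suc (bsum n)"
  using bsum_odd by simp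
lemma bsum_Suc_le: "bsum (n+1) \<le> bsum n + 1"
proof (induction n rule: nat_less_induct)
  case (1 n)
  show ?case
  proof (cases "even n")
    case True then obtain m where "n = 2*m" by blast
    then show ?thesis by simp
  next
    case False then obtain m where n: "n = 2*m+1" by (metis oddE)
    have "n + 1 = 2*(m+1)" using n by simp
    hence "bsum (n+1) = bsum (m+1)" by (metis bsum_even)
    moreover have "bsum (m+1) \<le> bsum m + 1" using 1 n by simp
    ultimately show ?thesis using n by simp
  qed
qed

definition cnt :: "int \<Rightarrow> nat \<Rightarrow> nat \<Rightarrow> nat" where
  "cnt j t N = card {n. n < N \<and> int (bsum (n + t)) - int (bsum n) = j}"

lemma delta_cnt: "delta j t = lim (\<lambda>N. real (cnt j t N) / real N)"
  by (simp add: delta_def cnt_def)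

lemma card_lt_Suc: "card {n. n < Suc N \<and> P n} = card {n. n < N \<and> P n} + (if P N then 1 else 0)"
proof -
  have "{n. n < Suc N \<and> P n} = (if P N then insert N {n. n < N \<and> P n} else {n. n < N \<and> P n})"
    by (auto simp: less_Suc_eq)
  then show ?thesis by simp
qed

lemma card_lt_double: "card {n::nat. n < 2*N \<and> P n} = card {m. m < N \<and> P (2*m)} + card {m. m < N \<and> P (2*m+1)}"
proof (induction N)
  case 0 then show ?case by simp
next
  case (Suc N)
  have e: "2 * Suc N = Suc (Suc (2*N))" by simp
  show ?case unfolding e card_lt_Suc using Suc by simp
qed

lemma cnt_Suc: "cnt j t N \<le> cnt j t (Suc N)" "cnt j t (Suc N) \<le> cnt j t N + 1"
  unfolding cnt_def card_lt_Suc by auto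

lemma cnt_zero: "cnt j 0 N = (if j = 0 then N else 0)"
  unfolding cnt_def by simp

lemma cnt_even: "cnt j (2*t) (2*N) = 2 * cnt j t N"
proof -
  have a: "int (bsum (2*m + 2*t)) - int (bsum (2*m)) = int (bsum (m + t)) - int (bsum m)" for m
    by (metis bsum_even distrib_left)
  have b: "int (bsum (2*m+1 + 2*t)) - int (bsum (2*m+1)) = int (bsum (m + t)) - int (bsum m)" for m
  proof -
    have "bsum (2*m+1+2*t) = bsum (m+t) + 1" by (metis bsum_odd distrib_left add.assoc add.commute)
    then show ?thesis by (simp add: bsum_odd)
  qed
  show ?thesis unfolding cnt_def card_lt_double a b by simp
qed

lemma cnt_odd: "cnt j (2*t+1) (2*N) = cnt (j-1) t N + cnt (j+1) (t+1) N"
proof -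
  have a: "(int (bsum (2*m + (2*t+1))) - int (bsum (2*m)) = j) = (int (bsum (m + t)) - int (bsum m) = j - 1)" for m
  proof -
    have "bsum (2*m + (2*t+1)) = bsum (m+t) + 1" by (metis bsum_odd distrib_left add.assoc)
    then show ?thesis by simp arith
  qed
  have b: "(int (bsum (2*m+1 + (2*t+1))) - int (bsum (2*m+1)) = j) = (int (bsum (m + (t+1))) - int (bsum m) = j+1)" for m
  proof -
    have "2*m+1 + (2*t+1) = 2*(m+(t+1))" by simp
    then have "bsum (2*m+1 + (2*t+1)) = bsum (m+(t+1))" by (metis bsum_even)
    then show ?thesis by simp arith
  qed
  show ?thesis unfolding cnt_def card_lt_double a b by simp
qed

lemma cnt_one_big: "j \<ge> 2 \<Longrightarrow> cnt j 1 N = 0"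
proof -
  assume j: "j \<ge> 2"
  have "{n. n < N \<and> int (bsum (n + 1)) - int (bsum n) = j} = {}"
  proof (rule equals0I)
    fix n assume "n \<in> {n. n < N \<and> int (bsum (n + 1)) - int (bsum n) = j}"
    then have "int (bsum (n + 1)) - int (bsum n) = j" by simp
    moreover have "bsum (n+1) \<le> bsum n + 1" by (rule bsum_Suc_le)
    ultimately show False using j by linarith
  qed
  then show ?thesis unfolding cnt_def by simp
qed

lemma limseq_even_odd:
  assumes "(\<lambda>n. f (2 * n)) \<longlonglongrightarrow> (l :: real)"
      and "(\<lambda>n. f (2 * n + 1)) \<longlonglongrightarrow> l"
  shows "f \<longlonglongrightarrow> l"
proof -
  have ev: "eventually P sequentially"
    if E: "eventually (\<lambda>n. P (2 * n)) sequentially" and O: "eventually (\<lambda>n. P (2 * n + 1)) sequentially" for P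
  proof -
    from E obtain n_e where ne: "\<And>n. n \<ge> n_e \<Longrightarrow> P (2 * n)"
      by (auto simp: eventually_sequentially)
    from O obtain n_o where no: "\<And>n. n \<ge> n_o \<Longrightarrow> P (Suc (2 * n))"
      by (auto simp: eventually_sequentially)
    show ?thesis
      unfolding eventually_sequentially
    proof (intro exI allI impI)
      fix n assume "max (2 * n_e) (2 * n_o + 1) \<le> n" then show "P n"
        using ne no by (cases "even n") (auto elim!: evenE oddE)
    qed
  qed
  show ?thesis using assms by (auto simp: filterlim_iff intro: ev)
qed

lemma conv_from_even:
  fixes f :: "nat \<Rightarrow> nat"
  assumes mono: "\<And>N. f N \<le> f (Suc N)" "\<And>N. f (Suc N) \<le> f N + 1"
    and lim: "(\<lambda>N. real (f (2*N)) / real (2*N)) \<longlonglongrightarrow> L"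
  shows "(\<lambda>N. real (f N) / real N) \<longlonglongrightarrow> L"
proof (rule limseq_even_odd[OF lim])
  have c1: "(\<lambda>N. real (2*N) / real (2*N+1)) \<longlonglongrightarrow> 1" by real_asymp
  have c2: "(\<lambda>N. 1 / real (2*N+1)) \<longlonglongrightarrow> 0" by real_asymp
  have la: "(\<lambda>N. real (f (2*N)) / real (2*N) * (real (2*N) / real (2*N+1))) \<longlonglongrightarrow> L * 1"
    by (intro tendsto_mult lim c1)
  have eqa: "real (f (2*N)) / real (2*N) * (real (2*N) / real (2*N+1)) = real (f (2*N)) / real (2*N+1)" if "N > 0" for N
    using that by (simp add: field_simps)
  have la': "(\<lambda>N. real (f (2*N)) / real (2*N+1)) \<longlonglongrightarrow> L"
    using la by (subst (asm) tendsto_cong[where g="\<lambda>N. real (f (2*N)) / real (2*N+1)"])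
       (auto simp: eventually_sequentially eqa intro!: exI[of _ 1])
  have lb: "(\<lambda>N. real (f (2*N)) / real (2*N+1) + 1 / real (2*N+1)) \<longlonglongrightarrow> L + 0"
    by (intro tendsto_add la' c2)
  show "(\<lambda>N. real (f (2*N+1)) / real (2*N+1)) \<longlonglongrightarrow> L"
  proof (rule tendsto_sandwich[OF _ _ la' ])
    show "\<forall>\<^sub>F N in sequentially. real (f (2*N)) / real (2*N+1) \<le> real (f (2*N+1)) / real (2*N+1)"
    proof (rule always_eventually, rule allI)
      fix N
      have "real (f (2*N)) \<le> real (f (2*N+1))" using mono(1)[of "2*N"] by simp
      then show "real (f (2*N)) / real (2*N+1) \<le> real (f (2*N+1)) / real (2*N+1)"
        by (rule divide_right_mono) simp
    qed
    show "\<forall>\<^sub>F N in sequentially. real (f (2*N+1)) / real (2*N+1) \<le> real (f (2*N)) / real (2*N+1) + 1 / real (2*N+1)"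
    proof (rule always_eventually, rule allI)
      fix N
      have "real (f (2*N+1)) \<le> real (f (2*N)) + 1" using mono(2)[of "2*N"] by simp
      then show "real (f (2*N+1)) / real (2*N+1) \<le> real (f (2*N)) / real (2*N+1) + 1 / real (2*N+1)"
        by (simp add: add_divide_distrib[symmetric] divide_right_mono)
    qed
    show "(\<lambda>N. real (f (2*N)) / real (2*N+1) + 1 / real (2*N+1)) \<longlonglongrightarrow> L" using lb by simp
  qed
qed



abbreviation rr :: "int \<Rightarrow> nat \<Rightarrow> nat \<Rightarrow> real" where
  "rr j t N \<equiv> real (cnt j t N) / real N"

lemma conv_even_step:
  assumes "(\<lambda>N. rr j t N) \<longlonglongrightarrow> L"
  shows "(\<lambda>N. rr j (2*t) N) \<longlonglongrightarrow> L"
proof (rule conv_from_even)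
  show "cnt j (2*t) N \<le> cnt j (2*t) (Suc N)" for N by (rule cnt_Suc)
  show "cnt j (2*t) (Suc N) \<le> cnt j (2*t) N + 1" for N by (rule cnt_Suc)
  have "real (cnt j (2*t) (2*N)) / real (2*N) = rr j t N" for N
    unfolding cnt_even by (cases "N = 0") (simp_all add: field_simps)
  then show "(\<lambda>N. real (cnt j (2*t) (2*N)) / real (2*N)) \<longlonglongrightarrow> L" using assms by simp
qed

lemma conv_odd_step:
  assumes "(\<lambda>N. rr (j-1) t N) \<longlonglongrightarrow> L1" "(\<lambda>N. rr (j+1) (t+1) N) \<longlonglongrightarrow> L2"
  shows "(\<lambda>N. rr j (2*t+1) N) \<longlonglongrightarrow> (L1 + L2) / 2"
proof (rule conv_from_even)
  show "cnt j (2*t+1) N \<le> cnt j (2*t+1) (Suc N)" for N by (rule cnt_Suc)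
  show "cnt j (2*t+1) (Suc N) \<le> cnt j (2*t+1) N + 1" for N by (rule cnt_Suc)
  have e: "(\<lambda>N. real (cnt j (2*t+1) (2*N)) / real (2*N)) = (\<lambda>N. (rr (j-1) t N + rr (j+1) (t+1) N) / 2)"
    unfolding cnt_odd by (rule ext) (simp add: add_divide_distrib)
  have "(\<lambda>N. (rr (j-1) t N + rr (j+1) (t+1) N) / 2) \<longlonglongrightarrow> (L1 + L2) / 2"
    by (intro tendsto_intros assms) simp
  then show "(\<lambda>N. real (cnt j (2*t+1) (2*N)) / real (2*N)) \<longlonglongrightarrow> (L1 + L2) / 2" unfolding e .
qed

lemma conv_zero: "(\<lambda>N. rr j 0 N) \<longlonglongrightarrow> (if j = 0 then 1 else 0)"
proof (cases "j = 0")
  case True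
  have "(\<lambda>N. rr j 0 N) \<longlonglongrightarrow> 1"
  proof (rule tendsto_eventually)
    show "\<forall>\<^sub>F N in sequentially. rr j 0 N = 1"
      using True by (auto simp: cnt_zero eventually_sequentially intro!: exI[of _ 1])
  qed
  then show ?thesis using True by simp
next
  case False
  then show ?thesis by (simp add: cnt_zero)
qed

definition d1 :: "int \<Rightarrow> real" where
  "d1 j = (if j \<le> 1 then (1/2) ^ (nat (2 - j)) else 0)"

lemma conv_one: "(\<lambda>N. rr j 1 N) \<longlonglongrightarrow> d1 j"
proof (cases "j \<ge> 2")
  case True
  have z: "cnt j 1 N = 0" for N using cnt_one_big[OF True] .
  show ?thesis unfolding d1_def z using True by simp
next
  case False
  define m where "m = nat (1 - j)"
  have m: "j = 1 - int m" using False unfolding m_def by simp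
  have "(\<lambda>N. rr (1 - int m) 1 N) \<longlonglongrightarrow> (1/2) ^ (m+1)"
  proof (induction m)
    case 0
    have a: "(\<lambda>N. rr (1 - 1) 0 N) \<longlonglongrightarrow> 1" using conv_zero[of 0] by simp
    have z: "cnt (1+1) (0+1) N = 0" for N using cnt_one_big[of "1+1" N] by simp
    have b: "(\<lambda>N. rr (1 + 1) (0+1) N) \<longlonglongrightarrow> 0" unfolding z by simp
    from conv_odd_step[OF a b] show ?case by simp
  next
    case (Suc m)
    have a: "(\<lambda>N. rr (1 - int (Suc m) - 1) 0 N) \<longlonglongrightarrow> 0" using conv_zero[of "1 - int (Suc m) - 1"] by simp
    have b: "(\<lambda>N. rr (1 - int (Suc m) + 1) (0+1) N) \<longlonglongrightarrow> (1/2) ^ (m+1)"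
      using Suc by (simp add: algebra_simps)
    from conv_odd_step[OF a b] show ?case by (simp add: field_simps)
  qed
  moreover have "d1 j = (1/2) ^ (m+1)" using m by (simp add: d1_def nat_add_distrib)
  ultimately show ?thesis using m by (simp only:)
qed

lemma conv_all: "\<forall>j. convergent (\<lambda>N. rr j t N)"
proof (induction t rule: less_induct)
  case (less t)
  show ?case
  proof (cases "t \<le> 1")
    case True
    then consider "t = 0" | "t = 1" by linarith
    then show ?thesis
      by cases (use conv_zero conv_one convergent_def in blast)+
  next
    case big: False
    show ?thesis
    proof (cases "even t")
      case True
      then obtain u where hu: "t = 2*u" by blast
      with big have "u < t" by simp
      show ?thesis
      proof
        fix j
        obtain L where "(\<lambda>N. rr j u N) \<longlonglongrightarrow> L" using less \<open>u < t\<close> convergent_def by blast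
        from conv_even_step[OF this] show "convergent (\<lambda>N. rr j t N)" unfolding hu convergent_def by blast
      qed
    next
      case False
      then obtain u where hu: "t = 2*u+1" by (metis oddE)
      with big have "u < t" "u + 1 < t" by simp_all
      show ?thesis
      proof
        fix j
        obtain L1 where 1: "(\<lambda>N. rr (j-1) u N) \<longlonglongrightarrow> L1" using less \<open>u < t\<close> convergent_def by blast
        obtain L2 where 2: "(\<lambda>N. rr (j+1) (u+1) N) \<longlonglongrightarrow> L2" using less \<open>u+1 < t\<close> convergent_def by blast
        from conv_odd_step[OF 1 2] show "convergent (\<lambda>N. rr j t N)" unfolding hu convergent_def by blast
      qed
    qed
  qed
qed

lemma delta_lim: "(\<lambda>N. rr j t N) \<longlonglongrightarrow> delta j t"
  using conv_all[of t] unfolding delta_cnt by (simp add: convergent_LIMSEQ_iff)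

lemma delta_zero: "delta j 0 = (if j = 0 then 1 else 0)"
  using LIMSEQ_unique[OF delta_lim conv_zero] .

lemma delta_one: "delta j 1 = d1 j"
  using LIMSEQ_unique[OF delta_lim conv_one] .

lemma delta_even: "delta j (2*t) = delta j t"
  using LIMSEQ_unique[OF delta_lim conv_even_step[OF delta_lim]] .

lemma delta_odd: "delta j (2*t+1) = (delta (j-1) t + delta (j+1) (t+1)) / 2"
  using LIMSEQ_unique[OF delta_lim conv_odd_step[OF delta_lim delta_lim]] .

lemma delta_nonneg: "delta j t \<ge> 0"
  by (rule LIMSEQ_le_const[OF delta_lim]) auto



lemma delta_one': "delta j (Suc 0) = d1 j" using delta_one[of j] by simp

lemma bij_shift: "bij (\<lambda>k::int. k + c)"
  by (rule bij_betwI[where g="\<lambda>k. k - c"]) auto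

lemma summable_shift:
  fixes g :: "int \<Rightarrow> 'a::{comm_monoid_add,topological_space}"
  assumes "g summable_on UNIV" shows "(\<lambda>k. g (k + c)) summable_on UNIV"
  using summable_on_reindex_bij_betw[OF bij_shift[of c], of g] assms by simp

lemma infsum_shift:
  fixes g :: "int \<Rightarrow> 'a::{comm_monoid_add,t2_space}"
  shows "(\<Sum>\<^sub>\<infinity>k. g (k + c)) = (\<Sum>\<^sub>\<infinity>k. g k)"
  using infsum_reindex_bij_betw[OF bij_shift[of c], of g] by simp

lemma exp_half_lt_2: "exp (1/2::real) < 2"
proof -
  have "exp (1/2::real) * exp (1/2) = exp 1" by (simp flip: exp_add)
  also have "\<dots> < 4" using e_less_272 by simp
  finally have "exp (1/2::real) * exp (1/2) < 2 * 2" by simp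
  show ?thesis
  proof (rule ccontr)
    assume "\<not> exp (1/2::real) < 2"
    then have "2 \<le> exp (1/2::real)" by linarith
    then have h: "2 \<le> exp (1/2::real)" .
    have "2 * 2 \<le> exp (1/2::real) * exp (1/2)" using mult_mono[OF h h] by simp
    with \<open>exp (1/2::real) * exp (1/2) < 2 * 2\<close> show False by simp
  qed
qed

lemma summ_one:
  assumes y: "y \<ge> -1/2"
  shows "(\<lambda>k. delta k 1 * exp (of_int k * y)) summable_on UNIV"
proof -
  define q where "q = exp (-y) / 2"
  have q0: "q \<ge> 0" unfolding q_def by simp
  have ey: "exp (-y) \<le> exp (1/2)" using y by simp
  have q1: "q < 1" using ey exp_half_lt_2 unfolding q_def by linarith
  have sm: "summable (\<lambda>m. exp y / 2 * q ^ m)"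
    using q0 q1 by (intro summable_mult summable_geometric) simp
  have eqm: "exp y / 2 * q ^ m = delta (1 - int m) 1 * exp (of_int (1 - int m) * y)" for m
  proof -
    have "delta (1 - int m) 1 = (1/2) ^ (m+1)" using delta_one[of "1 - int m"] by (simp add: d1_def nat_add_distrib)
    moreover have "exp (of_int (1 - int m) * y) = exp y * exp (-y) ^ m"
      by (simp add: algebra_simps exp_diff exp_of_nat_mult[symmetric] exp_minus field_simps)
    ultimately show ?thesis unfolding q_def by (simp add: power_divide field_simps)
  qed
  have "summable (\<lambda>m. delta (1 - int m) 1 * exp (of_int (1 - int m) * y))" using sm unfolding eqm .
  then have "(\<lambda>m. delta (1 - int m) 1 * exp (of_int (1 - int m) * y)) summable_on UNIV"
    by (subst summable_on_UNIV_nonneg_real_iff) (auto intro!: mult_nonneg_nonneg delta_nonneg)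
  then have "(\<lambda>k. delta k 1 * exp (of_int k * y)) summable_on (\<lambda>m. 1 - int m) ` UNIV"
    by (subst summable_on_reindex) (auto simp: inj_on_def o_def)
  moreover have "(\<lambda>m. 1 - int m) ` UNIV = {k. k \<le> 1}"
  proof (rule set_eqI, rule iffI)
    fix k assume "k \<in> {k. k \<le> (1::int)}"
    then have "k = 1 - int (nat (1 - k))" by simp
    then show "k \<in> (\<lambda>m. 1 - int m) ` UNIV" by blast
  qed auto
  ultimately have "(\<lambda>k. delta k 1 * exp (of_int k * y)) summable_on {k. k \<le> 1}" by simp
  then show ?thesis
    by (subst summable_on_cong_neutral[where T="{k. k \<le> 1}" and g="\<lambda>k. delta k 1 * exp (of_int k * y)"])
       (auto simp: delta_one delta_one' d1_def)
qed

lemma summ_zero: "(\<lambda>k. delta k 0 * exp (of_int k * y)) summable_on UNIV"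
proof -
  have "(\<lambda>k. delta k 0 * exp (of_int k * y)) summable_on {0}" by (rule summable_on_finite) simp
  then show ?thesis
    by (subst summable_on_cong_neutral[where T="{0}" and g="\<lambda>k. delta k 0 * exp (of_int k * y)"])
       (auto simp: delta_zero)
qed

lemma summ_odd:
  assumes "(\<lambda>k. delta k t * exp (of_int k * y)) summable_on UNIV"
    "(\<lambda>k. delta k (t+1) * exp (of_int k * y)) summable_on UNIV"
  shows "(\<lambda>k. delta k (2*t+1) * exp (of_int k * y)) summable_on UNIV"
proof -
  have a: "(\<lambda>k. exp y / 2 * (delta (k + -1) t * exp (of_int (k + -1) * y))) summable_on UNIV"
    by (intro summable_on_cmult_right summable_shift assms)
  have b: "(\<lambda>k. exp (-y) / 2 * (delta (k + 1) (t+1) * exp (of_int (k + 1) * y))) summable_on UNIV"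
    by (intro summable_on_cmult_right summable_shift assms)
  have e: "delta k (2*t+1) * exp (of_int k * y) =
      exp y / 2 * (delta (k + -1) t * exp (of_int (k + -1) * y)) +
      exp (-y) / 2 * (delta (k + 1) (t+1) * exp (of_int (k + 1) * y))" for k
  proof -
    have x1: "exp (of_int (k + -1) * y) = exp (of_int k * y) / exp y" by (simp add: algebra_simps exp_diff)
    have x2: "exp (of_int (k + 1) * y) = exp (of_int k * y) * exp y" by (simp add: algebra_simps exp_add)
    show ?thesis unfolding delta_odd x1 x2 exp_minus by (simp add: field_simps)
  qed
  show ?thesis unfolding e by (intro summable_on_add a b)
qed

lemma summ_real:
  assumes y: "y \<ge> -1/2"
  shows "(\<lambda>k. delta k t * exp (of_int k * y)) summable_on UNIV"
proof (induction t rule: less_induct)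
  case (less t)
  show ?case
  proof (cases "t \<le> 1")
    case True
    then consider "t = 0" | "t = 1" by linarith
    then show ?thesis by cases (use summ_zero summ_one[OF y] in auto)
  next
    case big: False
    show ?thesis
    proof (cases "even t")
      case True
      then obtain u where hu: "t = 2*u" by blast
      with big have "u < t" by simp
      then show ?thesis using less unfolding hu delta_even by blast
    next
      case False
      then obtain u where hu: "t = 2*u+1" by (metis oddE)
      with big have "u < t" "u + 1 < t" by simp_all
      have h1: "(\<lambda>k. delta k u * exp (of_int k * y)) summable_on UNIV" using less \<open>u < t\<close> by blast
      have h2: "(\<lambda>k. delta k (u+1) * exp (of_int k * y)) summable_on UNIV" using less \<open>u+1 < t\<close> by blast
      show ?thesis using summ_odd[OF h1 h2] hu by simp
    qed
  qed
qed

definition Gf :: "nat \<Rightarrow> complex \<Rightarrow> complex" where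
  "Gf t u = (\<Sum>\<^sub>\<infinity>k\<in>(UNIV::int set). complex_of_real (delta k t) * exp (of_int k * u))"

lemma cgf_Gf: "cgf t = (\<lambda>u. Ln (Gf t u))"
  by (simp add: cgf_def Gf_def fun_eq_iff)

lemma summ_cplx:
  assumes "Re u \<ge> -1/2"
  shows "(\<lambda>k. complex_of_real (delta k t) * exp (of_int k * u)) summable_on UNIV"
proof (rule abs_summable_summable)
  have "norm (complex_of_real (delta k t) * exp (of_int k * u)) = delta k t * exp (of_int k * Re u)" for k
    by (simp add: norm_mult norm_exp_eq_Re delta_nonneg)
  then show "(\<lambda>k. norm (complex_of_real (delta k t) * exp (of_int k * u))) summable_on UNIV"
    using summ_real[OF assms, of t] by simp
qed

lemma Gf_even: "Gf (2*t) = Gf t"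
  by (simp add: Gf_def delta_even fun_eq_iff)

lemma Gf_zero: "Gf 0 u = 1"
proof -
  have "Gf 0 u = (\<Sum>\<^sub>\<infinity>k\<in>{0::int}. complex_of_real (delta k 0) * exp (of_int k * u))"
    unfolding Gf_def by (rule infsum_cong_neutral) (auto simp: delta_zero)
  also have "\<dots> = 1" by (simp add: delta_zero)
  finally show ?thesis .
qed

lemma Gf_odd:
  assumes "Re u \<ge> -1/2"
  shows "Gf (2*t+1) u = (exp u * Gf t u + exp (-u) * Gf (t+1) u) / 2"
proof -
  define A where "A = (\<lambda>k. complex_of_real (delta k t) * exp (of_int k * u))"
  define B where "B = (\<lambda>k. complex_of_real (delta k (t+1)) * exp (of_int k * u))"
  have sA: "A summable_on UNIV" unfolding A_def by (rule summ_cplx[OF assms])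
  have sB: "B summable_on UNIV" unfolding B_def by (rule summ_cplx[OF assms])
  have sA': "(\<lambda>k. exp u / 2 * A (k + -1)) summable_on UNIV"
    by (intro summable_on_cmult_right summable_shift sA)
  have sB': "(\<lambda>k. exp (-u) / 2 * B (k + 1)) summable_on UNIV"
    by (intro summable_on_cmult_right summable_shift sB)
  have e: "complex_of_real (delta k (2*t+1)) * exp (of_int k * u) =
      exp u / 2 * A (k + -1) + exp (-u) / 2 * B (k + 1)" for k
  proof -
    have x1: "exp (of_int (k + -1) * u) = exp (of_int k * u) / exp u" by (simp add: algebra_simps exp_diff)
    have x2: "exp (of_int (k + 1) * u) = exp (of_int k * u) * exp u" by (simp add: algebra_simps exp_add)
    show ?thesis unfolding delta_odd A_def B_def x1 x2 exp_minus by (simp add: field_simps)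
  qed
  have "Gf (2*t+1) u = (\<Sum>\<^sub>\<infinity>k. exp u / 2 * A (k + -1) + exp (-u) / 2 * B (k + 1))"
    unfolding Gf_def e ..
  also have "\<dots> = (\<Sum>\<^sub>\<infinity>k. exp u / 2 * A (k + -1)) + (\<Sum>\<^sub>\<infinity>k. exp (-u) / 2 * B (k + 1))"
    by (rule infsum_add[OF sA' sB'])
  also have "\<dots> = exp u / 2 * (\<Sum>\<^sub>\<infinity>k. A (k + -1)) + exp (-u) / 2 * (\<Sum>\<^sub>\<infinity>k. B (k + 1))"
    by (simp only: infsum_cmult_right')
  also have "\<dots> = exp u / 2 * (\<Sum>\<^sub>\<infinity>k. A k) + exp (-u) / 2 * (\<Sum>\<^sub>\<infinity>k. B k)"
    by (simp only: infsum_shift[of A "-1"] infsum_shift[of B 1])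
  also have "\<dots> = (exp u * Gf t u + exp (-u) * Gf (t+1) u) / 2"
    unfolding A_def B_def Gf_def by (simp add: field_simps)
  finally show ?thesis .
qed



abbreviation Sb :: "complex set" where "Sb \<equiv> ball 0 (1/2)"

lemma Sb_Re: "u \<in> Sb \<Longrightarrow> Re u \<ge> -1/2"
  using abs_Re_le_cmod[of u] by auto

lemma Sb_den: "u \<in> Sb \<Longrightarrow> 2 - exp (-u) \<noteq> 0"
proof
  assume u: "u \<in> Sb" and e: "2 - exp (-u) = 0"
  have "norm (exp (-u)) = exp (- Re u)" by (simp add: norm_exp_eq_Re)
  also have "\<dots> \<le> exp (1/2)" using Sb_Re[OF u] by simp
  also have "\<dots> < 2" by (rule exp_half_lt_2)
  finally have "norm (exp (-u)) < 2" .
  moreover have "exp (-u) = 2" using e by simp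
  ultimately show False by simp
qed

lemma Gf_one: assumes "u \<in> Sb" shows "Gf 1 u = exp u / (2 - exp (-u))"
proof -
  have "Gf (2*0+1) u = (exp u * Gf 0 u + exp (-u) * Gf (0+1) u) / 2"
    by (rule Gf_odd[OF Sb_Re[OF assms]])
  then have "Gf 1 u = (exp u + exp (-u) * Gf 1 u) / 2" by (simp add: Gf_zero)
  then have "Gf 1 u * (2 - exp (-u)) = exp u" by (simp add: field_simps)
  then show ?thesis using Sb_den[OF assms] by (simp add: field_simps)
qed

lemma Gf_one': "u \<in> Sb \<Longrightarrow> Gf (Suc 0) u = exp u / (2 - exp (-u))"
  using Gf_one by simp

lemma Gf_holo: "Gf t holomorphic_on Sb"
proof (induction t rule: less_induct)
  case (less t)
  show ?case
  proof (cases "t \<le> 1")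
    case True
    then consider "t = 0" | "t = 1" by linarith
    then show ?thesis
    proof cases
      case 1
      have "(\<lambda>u. 1) holomorphic_on Sb" by simp
      then show ?thesis unfolding 1 by (subst holomorphic_cong[OF refl]) (auto simp: Gf_zero)
    next
      case 2
      have "(\<lambda>u. exp u / (2 - exp (-u))) holomorphic_on Sb"
        using Sb_den by (intro holomorphic_intros) auto
      then show ?thesis unfolding 2 by (subst holomorphic_cong[OF refl]) (auto simp: Gf_one')
    qed
  next
    case big: False
    show ?thesis
    proof (cases "even t")
      case True
      then obtain u where hu: "t = 2*u" by blast
      with big have "u < t" by simp
      then show ?thesis using less unfolding hu Gf_even by blast
    next
      case False
      then obtain u where hu: "t = 2*u+1" by (metis oddE)
      with big have "u < t" "u + 1 < t" by simp_all
      then have h1: "Gf u holomorphic_on Sb" and h2: "Gf (u+1) holomorphic_on Sb" using less by auto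
      have H: "(\<lambda>w. (exp w * Gf u w + exp (-w) * Gf (u+1) w) / 2) holomorphic_on Sb"
        by (intro holomorphic_intros h1 h2) auto
      have eq: "Gf t w = (exp w * Gf u w + exp (-w) * Gf (u+1) w) / 2" if "w \<in> Sb" for w
        using Gf_odd[OF Sb_Re[OF that], of u] unfolding hu .
      show ?thesis by (rule holomorphic_cong[THEN iffD2, OF refl eq]) (assumption, rule H)
    qed
  qed
qed

lemma Gf_at0: "Gf t 0 = 1"
proof (induction t rule: less_induct)
  case (less t)
  show ?case
  proof (cases "t \<le> 1")
    case True
    then consider "t = 0" | "t = 1" by linarith
    then show ?thesis by cases (simp_all add: Gf_zero Gf_one')
  next
    case big: False
    show ?thesis
    proof (cases "even t")
      case True
      then obtain u where hu: "t = 2*u" by blast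
      with big have "u < t" by simp
      then show ?thesis using less unfolding hu Gf_even by blast
    next
      case False
      then obtain u where hu: "t = 2*u+1" by (metis oddE)
      with big have "u < t" "u + 1 < t" by simp_all
      then have "Gf u 0 = 1" "Gf (u+1) 0 = 1" using less by auto
      then show ?thesis unfolding hu using Gf_odd[of 0 u] by simp
    qed
  qed
qed



definition M :: "nat \<Rightarrow> nat \<Rightarrow> complex" where
  "M n t = (deriv ^^ n) (Gf t) 0"

lemma fp2: "(deriv ^^ 2) f = deriv (deriv f)" by (simp add: numeral_2_eq_2)
lemma fp3: "(deriv ^^ 3) f = deriv (deriv (deriv f))" by (simp add: numeral_3_eq_3)

lemma deriv_exp_fun: "deriv exp = (exp :: complex \<Rightarrow> complex)"
  by (rule ext) (rule DERIV_imp_deriv[OF DERIV_exp])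

lemma hexp: "(deriv ^^ n) exp = (exp :: complex \<Rightarrow> complex)"
  by (induction n) (simp_all add: deriv_exp_fun)

lemma hexpm: "(deriv ^^ n) (\<lambda>w. exp (-w)) (z::complex) = (-1)^n * exp (-z)"
proof -
  have "(deriv ^^ n) (\<lambda>w. exp ((-1) * w)) z = (-1)^n * (deriv ^^ n) exp ((-1) * z)"
    by (rule higher_deriv_compose_linear[where S=UNIV and T=UNIV]) (auto intro: holomorphic_intros)
  then show ?thesis by (simp add: hexp)
qed

lemma open_Sb: "open Sb" by simp
lemma zero_Sb: "(0::complex) \<in> Sb" by simp

lemma M_even: "M n (2*t) = M n t"
  by (simp add: M_def Gf_even)

lemma M_odd: "M n (2*t+1) =
  (\<Sum>i=0..n. of_nat (n choose i) * M (n-i) t) / 2 + (\<Sum>i=0..n. of_nat (n choose i) * ((-1)^i * M (n-i) (t+1))) / 2"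
proof -
  define p where "p = Gf t"
  define q where "q = Gf (t+1)"
  have hp: "p holomorphic_on Sb" and hq: "q holomorphic_on Sb" unfolding p_def q_def by (rule Gf_holo)+
  define c :: complex where "c = 1/2"
  define F where "F = (\<lambda>w. c * (exp w * p w) + c * (exp (-w) * q w))"
  have "eventually (\<lambda>w. Gf (2*t+1) w = F w) (nhds 0)"
  proof (rule eventually_nhds_in_open[OF open_Sb zero_Sb, THEN eventually_mono])
    fix w assume "w \<in> Sb"
    then show "Gf (2*t+1) w = F w" unfolding F_def p_def q_def c_def using Gf_odd[OF Sb_Re] by (simp add: field_simps)
  qed
  then have "M n (2*t+1) = (deriv ^^ n) F 0" unfolding M_def by (rule higher_deriv_cong_ev) simp
  also have "\<dots> = (deriv ^^ n) (\<lambda>w. c * (exp w * p w)) 0 + (deriv ^^ n) (\<lambda>w. c * (exp (-w) * q w)) 0"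
    unfolding F_def using hp hq by (intro higher_deriv_add[OF _ _ open_Sb zero_Sb] holomorphic_intros)
  also have "\<dots> = c * (deriv ^^ n) (\<lambda>w. exp w * p w) 0 + c * (deriv ^^ n) (\<lambda>w. exp (-w) * q w) 0"
    using hp hq by (simp add: higher_deriv_cmult[OF _ zero_Sb open_Sb] holomorphic_intros)
  also have "(deriv ^^ n) (\<lambda>w. exp w * p w) 0 = (\<Sum>i=0..n. of_nat (n choose i) * (deriv ^^ i) exp 0 * (deriv ^^ (n-i)) p 0)"
    using hp by (intro higher_deriv_mult[OF _ _ open_Sb zero_Sb] holomorphic_intros)
  also have "(deriv ^^ n) (\<lambda>w. exp (-w) * q w) 0 = (\<Sum>i=0..n. of_nat (n choose i) * (deriv ^^ i) (\<lambda>w. exp (-w)) 0 * (deriv ^^ (n-i)) q 0)"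
    using hq by (intro higher_deriv_mult[OF _ _ open_Sb zero_Sb] holomorphic_intros)
  finally show ?thesis unfolding M_def p_def q_def hexp hexpm c_def by (simp add: sum_divide_distrib mult.assoc)
qed

lemma M_zero: "M 0 t = 1" by (simp add: M_def Gf_at0)

lemma M_odd1: "M 1 (2*t+1) = (M 1 t + M 1 (t+1)) / 2"
  using M_odd[of 1 t] by (simp add: M_zero add_divide_distrib diff_divide_distrib)

lemma M_odd2: "M 2 (2*t+1) = (M 2 t + M 2 (t+1)) / 2 + M 1 t - M 1 (t+1) + 1"
  using M_odd[of 2 t] by (simp add: M_zero eval_nat_numeral add_divide_distrib diff_divide_distrib algebra_simps)

lemma M_odd3: "M 3 (2*t+1) = (M 3 t + M 3 (t+1)) / 2 + 3/2 * (M 2 t - M 2 (t+1)) + 3/2 * (M 1 t + M 1 (t+1))"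
  using M_odd[of 3 t] by (simp add: M_zero eval_nat_numeral add_divide_distrib diff_divide_distrib algebra_simps)



lemma M1_zero: "M 1 t = 0"
proof (induction t rule: less_induct)
  case (less t)
  show ?case
  proof (cases "t \<le> 1")
    case True
    have m0: "M 1 0 = 0"
    proof -
      have "Gf 0 = (\<lambda>u. 1)" by (simp add: fun_eq_iff Gf_zero)
      then show ?thesis unfolding M_def by simp
    qed
    have "M 1 (2*0+1) = (M 1 0 + M 1 (0+1)) / 2" by (rule M_odd1)
    then have m1: "M 1 1 = 0" using m0 by (simp add: field_simps)
    from True consider "t = 0" | "t = 1" by linarith
    then show ?thesis by cases (use m0 m1 in auto)
  next
    case big: False
    show ?thesis
    proof (cases "even t")
      case True
      then obtain u where hu: "t = 2*u" by blast
      with big have "u < t" by simp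
      then show ?thesis using less unfolding hu M_even by blast
    next
      case False
      then obtain u where hu: "t = 2*u+1" by (metis oddE)
      with big have "u < t" "u + 1 < t" by simp_all
      then have "M 1 u = 0" "M 1 (u+1) = 0" using less by auto
      then show ?thesis unfolding hu M_odd1 by simp
    qed
  qed
qed

lemma cum:
  assumes h: "h holomorphic_on Sb" and h0: "h 0 = 1" and h1: "deriv h 0 = 0"
  shows "(deriv ^^ 2) (\<lambda>u. Ln (h u)) 0 = (deriv ^^ 2) h 0"
    and "(deriv ^^ 3) (\<lambda>u. Ln (h u)) 0 = (deriv ^^ 3) h 0"
proof -
  define V where "V = Sb \<inter> h -` {w. Re w > 0}"
  have oV: "open V" unfolding V_def
    by (intro continuous_open_preimage holomorphic_on_imp_continuous_on[OF h] open_Sb open_halfspace_Re_gt)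
  have V0: "0 \<in> V" unfolding V_def using h0 by simp
  have VS: "V \<subseteq> Sb" unfolding V_def by auto
  have Vnp: "h z \<notin> \<real>\<^sub>\<le>\<^sub>0" if "z \<in> V" for z
  proof
    assume "h z \<in> \<real>\<^sub>\<le>\<^sub>0"
    then have "Re (h z) \<le> 0" by (auto simp: complex_nonpos_Reals_iff)
    moreover have "Re (h z) > 0" using that unfolding V_def by auto
    ultimately show False by simp
  qed
  have Vnz: "h z \<noteq> 0" if "z \<in> V" for z using Vnp[OF that] by auto
  define d1 where "d1 = deriv h"
  define d2 where "d2 = deriv d1"
  define d3 where "d3 = deriv d2"
  have hd1: "d1 holomorphic_on Sb" unfolding d1_def by (intro holomorphic_deriv h open_Sb)
  have hd2: "d2 holomorphic_on Sb" unfolding d2_def by (intro holomorphic_deriv hd1 open_Sb)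
  have D0: "(h has_field_derivative d1 z) (at z)" if "z \<in> Sb" for z
    unfolding d1_def using holomorphic_derivI[OF h open_Sb that] .
  have D1: "(d1 has_field_derivative d2 z) (at z)" if "z \<in> Sb" for z
    unfolding d2_def using holomorphic_derivI[OF hd1 open_Sb that] .
  have D2: "(d2 has_field_derivative d3 z) (at z)" if "z \<in> Sb" for z
    unfolding d3_def using holomorphic_derivI[OF hd2 open_Sb that] .
  define K where "K = (\<lambda>u. Ln (h u))"
  have s1: "deriv K z = d1 z / h z" if "z \<in> V" for z
  proof -
    have "(K has_field_derivative inverse (h z) * d1 z) (at z)"
      unfolding K_def using DERIV_chain2[OF has_field_derivative_Ln[OF Vnp[OF that]] D0] that VS by auto
    then show ?thesis using DERIV_imp_deriv by (simp add: field_simps)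
  qed
  have s2: "deriv (deriv K) z = (d2 z * h z - d1 z * d1 z) / (h z * h z)" if "z \<in> V" for z
  proof -
    have "deriv (deriv K) z = deriv (\<lambda>z. d1 z / h z) z"
      using eventually_nhds_in_open[OF oV that] by (intro deriv_cong_ev) (auto elim!: eventually_mono simp: s1)
    also have "\<dots> = (d2 z * h z - d1 z * d1 z) / (h z * h z)"
      using that VS by (intro DERIV_imp_deriv DERIV_divide D1 D0 Vnz) auto
    finally show ?thesis .
  qed
  have "(deriv ^^ 2) K 0 = deriv (deriv K) 0" by (simp add: fp2)
  also have "\<dots> = d2 0" using s2[OF V0] h0 h1 unfolding d1_def by simp
  also have "\<dots> = (deriv ^^ 2) h 0" unfolding d2_def d1_def by (simp add: fp2)
  finally show "(deriv ^^ 2) (\<lambda>u. Ln (h u)) 0 = (deriv ^^ 2) h 0" unfolding K_def .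
  have "(deriv ^^ 3) K 0 = deriv (deriv (deriv K)) 0" by (simp add: fp3)
  also have "\<dots> = deriv (\<lambda>z. (d2 z * h z - d1 z * d1 z) / (h z * h z)) 0"
    using eventually_nhds_in_open[OF oV V0] by (intro deriv_cong_ev) (auto elim!: eventually_mono simp: s2)
  also have "\<dots> = ((d3 0 * h 0 + d1 0 * d2 0 - (d2 0 * d1 0 + d2 0 * d1 0)) * (h 0 * h 0)
       - (d2 0 * h 0 - d1 0 * d1 0) * (d1 0 * h 0 + d1 0 * h 0)) / (h 0 * h 0 * (h 0 * h 0))"
    by (intro DERIV_imp_deriv DERIV_divide DERIV_diff DERIV_mult D0 D1 D2 zero_Sb) (simp add: h0)
  also have "\<dots> = d3 0" using h0 h1 unfolding d1_def by simp
  also have "\<dots> = (deriv ^^ 3) h 0" unfolding d3_def d2_def d1_def by (simp add: fp3)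
  finally show "(deriv ^^ 3) (\<lambda>u. Ln (h u)) 0 = (deriv ^^ 3) h 0" unfolding K_def .
qed

lemma kappa_M: "kappa 2 t = M 2 t" "kappa 3 t = M 3 t"
proof -
  have h1: "deriv (Gf t) 0 = 0" using M1_zero[of t] unfolding M_def by simp
  show "kappa 2 t = M 2 t" unfolding kappa_def M_def cgf_Gf by (rule cum(1)[OF Gf_holo Gf_at0 h1])
  show "kappa 3 t = M 3 t" unfolding kappa_def M_def cgf_Gf by (rule cum(2)[OF Gf_holo Gf_at0 h1])
qed

theorem corollary2p11:
  fixes t k :: nat
  assumes "k \<ge> 1"
  shows "D (2 ^ (k + 1) * t + 2 ^ k - 1) \<ge> min (D t) (D (t + 1)) + real k / 2 ^ (k - 1)"
proof -
  define a where "a m = Re (M 2 m)" for m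
  define b where "b m = Re (M 3 m)" for m
  have Dab: "D m = a m - b m / 3" for m unfolding D_def a_def b_def kappa_M by simp
  have ae: "a (2*m) = a m" for m unfolding a_def M_even ..
  have be: "b (2*m) = b m" for m unfolding b_def M_even ..
  have ao: "a (2*m+1) = (a m + a (m+1)) / 2 + 1" for m unfolding a_def M_odd2 M1_zero by simp
  have bo: "b (2*m+1) = (b m + b (m+1)) / 2 + 3/2 * (a m - a (m+1))" for m
    unfolding a_def b_def M_odd3 M1_zero by simp
  show ?thesis unfolding Dab using final_comb[OF ae be ao bo assms] .
qed

end
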